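(* Let $X\subset \operatorname{int}(S^1\times[-1,1])$ be an annular continuum, and let $V$ and hairs be as defined in the context. Assume that there exists a sequence $\{\gamma_n\}_{n\ge1}$ of hairs of $V$ with $\min(\gamma_n)_1 \to -\infty$, and that for every sequence $\{\gamma_n\}_{n\ge 1}$ of hairs of $V$ with $\min(\gamma_n)_1\to-\infty$ one has $\max(\gamma_n)_1\to+\infty$. Then for every $R>1$ there exists $L'<0$ such that whenever $\gamma$ is a hair of $V+k$ for some integer $k\ge 0$ and $(\gamma(1))_1\le L'$, we have $R\in(\gamma)_1$.
   Context: $\pi\colon\mathbb{R}\times[-1,1]\to S^1\times[-1,1]$ is the universal cover, with deck transformation $T(x,y)=(x+1,y)$; for a set $S$ and $k\in\mathbb{Z}$, $S+k$ denotes $T^k(S)$. For a point or set $S$, $(S)_1$ denotes its image under the first-coordinate projection. An annular continuum $X\subset\operatorname{int}(S^1\times[-1,1])$ is a continuum whose complement consists of exactly two components, $U_-\supset S^1\times\{-1\}$ and $U_+\supset S^1\times\{1\}$. Let $\tilde X=\pi^{-1}(X)$, $\tilde U_+=\pi^{-1}(U_+)$. Let $\eta=\max\{y:(0,y)\in\tilde X\}$, $x_0=(0,\eta)$, $\beta$ the vertical segment from $(0,1)$ to $x_0$, and $\beta'=\beta\setminus\{x_0\}$. The arcs $\beta'$ and $\beta'+1$ bound a region in $\tilde U_+$ containing $(0,1)\times\{1\}$; $V$ is the closure of this region relative to $\tilde U_+$. A hair of $V$ is an arc $\gamma\colon[0,1]\to V$ with $\gamma(0)\in\mathbb{R}\times\{1\}$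 (identified with its image). An arc $\gamma$ is a hair of $V+k$ if $\gamma-k$ is a hair of $V$. (The paper phrases the hypothesis on $\gamma$ as "$\gamma$ is a hair contained in $V^+=\bigcup_{j\ge 0}(V+j)$".) *)

theory Defs
  imports "HOL-Analysis.Analysis"
begin

text \<open>The circle S^1 is modelled as the unit circle in the complex plane; the closed
annulus is S^1 x [-1,1]; the universal cover is the plane region R x [-1,1],
with covering map (x,y) |-> (exp(2 pi i x), y).\<close>

definition S1 :: "complex set" where
  "S1 = sphere 0 1"

definition Ann :: "(complex \<times> real) set" where
  "Ann = S1 \<times> {-1..1}"

definition int_Ann :: "(complex \<times> real) set" where
  "int_Ann = S1 \<times> {-1<..<1}"

definition cover :: "real \<times> real \<Rightarrow> complex \<times> real" where
  "cover p = (cis (2 * pi * fst p), snd p)"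

definition annular_continuum :: "(complex \<times> real) set \<Rightarrow> bool" where
  "annular_continuum X \<longleftrightarrow> X \<subseteq> int_Ann \<and> X \<noteq> {} \<and> compact X \<and> connected X \<and>
     (\<exists>Um Up. components (Ann - X) = {Um, Up} \<and> Um \<noteq> Up \<and>
        S1 \<times> {-1} \<subseteq> Um \<and> S1 \<times> {1} \<subseteq> Up)"

definition U_plus :: "(complex \<times> real) set \<Rightarrow> (complex \<times> real) set" where
  "U_plus X = connected_component_set (Ann - X) (1, 1)"

definition lift_X :: "(complex \<times> real) set \<Rightarrow> (real \<times> real) set" where
  "lift_X X = {p. snd p \<in> {-1..1} \<and> cover p \<in> X}"

definition lift_U_plus :: "(complex \<times> real) set \<Rightarrow> (real \<times> real) set" where
  "lift_U_plus X = {p. snd p \<in> {-1..1} \<and> cover p \<in> U_plus X}"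

definition shift :: "int \<Rightarrow> (real \<times> real) set \<Rightarrow> (real \<times> real) set" where
  "shift k S = (\<lambda>p. p + (real_of_int k, 0)) ` S"

definition eta :: "(complex \<times> real) set \<Rightarrow> real" where
  "eta X = Sup {y. (0, y) \<in> lift_X X}"

definition x0 :: "(complex \<times> real) set \<Rightarrow> real \<times> real" where
  "x0 X = (0, eta X)"

text \<open>eta = max of the (compact, nonempty) fibre, written as Sup.\<close>

definition beta' :: "(complex \<times> real) set \<Rightarrow> (real \<times> real) set" where
  "beta' X = closed_segment (0, 1) (x0 X) - {x0 X}"

text \<open>The region of lift_U_plus bounded by beta' and beta'+1 containing (0,1) x {1},
i.e. the component of the complement of the two arcs containing (1/2, 1).\<close>
definition V_region :: "(complex \<times> real) set \<Rightarrow> (real \<times> real) set" where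
  "V_region X = connected_component_set (lift_U_plus X - (beta' X \<union> shift 1 (beta' X))) (1/2, 1)"

definition V :: "(complex \<times> real) set \<Rightarrow> (real \<times> real) set" where
  "V X = closure (V_region X) \<inter> lift_U_plus X"

definition hair :: "(real \<times> real) set \<Rightarrow> (real \<Rightarrow> real \<times> real) \<Rightarrow> bool" where
  "hair S \<gamma> \<longleftrightarrow> arc \<gamma> \<and> path_image \<gamma> \<subseteq> S \<and> snd (pathstart \<gamma>) = 1"

definition hair_shift :: "(complex \<times> real) set \<Rightarrow> int \<Rightarrow> (real \<Rightarrow> real \<times> real) \<Rightarrow> bool" where
  "hair_shift X k \<gamma> \<longleftrightarrow> hair (V X) (\<lambda>t. \<gamma> t - (real_of_int k, 0))"

text \<open>min and max of the first coordinate over the (compact) image of a hair, as Inf/Sup.\<close>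
definition min1 :: "(real \<Rightarrow> real \<times> real) \<Rightarrow> real" where
  "min1 \<gamma> = Inf (fst ` path_image \<gamma>)"

definition max1 :: "(real \<Rightarrow> real \<times> real) \<Rightarrow> real" where
  "max1 \<gamma> = Sup (fst ` path_image \<gamma>)"

end

theory Submission
  imports Defs
begin

lemma fst_img_props:
  assumes "path g"
  shows "compact (fst ` path_image g)" "connected (fst ` path_image g)"
        "fst ` path_image g \<noteq> {}"
proof -
  show "compact (fst ` path_image g)"
    by (intro compact_continuous_image continuous_intros compact_path_image assms)
  show "connected (fst ` path_image g)"
    by (intro connected_continuous_image continuous_intros connected_path_image assms)
  show "fst ` path_image g \<noteq> {}" by (simp add: path_image_nonempty)
qed

theorem lemma5:
  fixes X :: "(complex \<times> real) set"
  assumes "annular_continuum X"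
    and "\<exists>\<gamma>s :: nat \<Rightarrow> real \<Rightarrow> real \<times> real.
           (\<forall>n. hair (V X) (\<gamma>s n)) \<and> filterlim (\<lambda>n. min1 (\<gamma>s n)) at_bot sequentially"
    and "\<forall>\<gamma>s :: nat \<Rightarrow> real \<Rightarrow> real \<times> real.
           (\<forall>n. hair (V X) (\<gamma>s n)) \<and> filterlim (\<lambda>n. min1 (\<gamma>s n)) at_bot sequentially
           \<longrightarrow> filterlim (\<lambda>n. max1 (\<gamma>s n)) at_top sequentially"
  shows "\<forall>R > 1. \<exists>L' < 0. \<forall>k::int. \<forall>\<gamma>. k \<ge> 0 \<and> hair_shift X k \<gamma> \<and> fst (pathfinish \<gamma>) \<le> L'
           \<longrightarrow> R \<in> fst ` path_image \<gamma>"
proof (intro allI impI, rule ccontr)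
  fix R :: real
  assume R: "R > 1" and neg: "\<not> (\<exists>L' < 0. \<forall>k::int. \<forall>\<gamma>. k \<ge> 0 \<and> hair_shift X k \<gamma> \<and> fst (pathfinish \<gamma>) \<le> L'
           \<longrightarrow> R \<in> fst ` path_image \<gamma>)"
  have "\<forall>n::nat. \<exists>k::int. \<exists>\<gamma>. k \<ge> 0 \<and> hair_shift X k \<gamma> \<and> fst (pathfinish \<gamma>) \<le> -(real n + 1)
           \<and> R \<notin> fst ` path_image \<gamma>"
  proof
    fix n :: nat
    have "-(real n + 1) < 0" by simp
    then show "\<exists>k::int. \<exists>\<gamma>. k \<ge> 0 \<and> hair_shift X k \<gamma> \<and> fst (pathfinish \<gamma>) \<le> -(real n + 1)
           \<and> R \<notin> fst ` path_image \<gamma>" using neg by blast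
  qed
  then obtain K G where KG: "\<And>n. K n \<ge> 0 \<and> hair_shift X (K n) (G n) \<and> fst (pathfinish (G n)) \<le> -(real n + 1)
           \<and> R \<notin> fst ` path_image (G n)" by metis
  define D where "D = (\<lambda>n t. G n t - (real_of_int (K n), 0::real))"
  have hD: "hair (V X) (D n)" for n using KG[of n] by (simp add: hair_shift_def D_def)
  have pD: "path (D n)" for n using hD[of n] by (simp add: hair_def arc_imp_path)
  have finD: "fst (pathfinish (D n)) = fst (pathfinish (G n)) - K n" for n
    by (simp add: D_def pathfinish_def)
  have finin: "fst (pathfinish (D n)) \<in> fst ` path_image (D n)" for n
    by (simp add: pathfinish_in_path_image)
  have bdd: "bdd_below (fst ` path_image (D n))" "bdd_above (fst ` path_image (D n))" for n
    using compact_imp_bounded[OF fst_img_props(1)[OF pD[of n]]] bounded_imp_bdd_below bounded_imp_bdd_above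
    by auto
  have minle: "min1 (D n) \<le> -(real n + 1)" for n
  proof -
    have "min1 (D n) \<le> fst (pathfinish (D n))"
      unfolding min1_def by (rule cInf_lower[OF finin bdd(1)])
    also have "\<dots> \<le> -(real n + 1)" using finD[of n] KG[of n] by simp
    finally show ?thesis .
  qed
  have "filterlim (\<lambda>n. min1 (D n)) at_bot sequentially"
    unfolding filterlim_at_bot eventually_sequentially
  proof
    fix Z :: real
    show "\<exists>N. \<forall>n\<ge>N. min1 (D n) \<le> Z"
    proof (intro exI allI impI)
      fix n assume "nat \<lceil>-Z\<rceil> \<le> n"
      then have "-Z \<le> real n" by linarith
      then show "min1 (D n) \<le> Z" using minle[of n] by linarith
    qed
  qed
  with assms(3) hD have "filterlim (\<lambda>n. max1 (D n)) at_top sequentially" by blast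
  then obtain N where N: "\<And>n. n \<ge> N \<Longrightarrow> max1 (D n) \<ge> R + 1"
    unfolding filterlim_at_top eventually_sequentially by blast
  have "R < Sup (fst ` path_image (D N))" using N[of N] by (simp add: max1_def)
  then obtain b where b: "b \<in> fst ` path_image (D N)" "R < b"
    using less_cSup_iff[OF fst_img_props(3)[OF pD] bdd(2)] by blast
  have a: "fst (pathfinish (D N)) \<le> R - K N" using finD[of N] KG[of N] R by simp
  have "{fst (pathfinish (D N))..b} \<subseteq> fst ` path_image (D N)"
    by (rule connected_contains_Icc[OF fst_img_props(2)[OF pD] finin b(1)])
  moreover have "R - K N \<in> {fst (pathfinish (D N))..b}" using a b KG[of N] by auto
  ultimately have "R - K N \<in> fst ` path_image (D N)" by blast
  then obtain t where "t \<in> {0..1}" "fst (D N t) = R - K N"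
    by (auto simp: path_image_def)
  then have "R \<in> fst ` path_image (G N)"
    by (force simp: D_def path_image_def)
  with KG[of N] show False by blast
qed

end
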